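(* Let $X$ be a compact topological space, let $D\subseteq X$ with $D\neq\emptyset$, let $\overline{D}$ be the closure of $D$ in $X$, and put $\partial D:=\overline{D}\setminus D$. Let $Y$ be a Hausdorff topological space and let $f\colon\overline{D}\to Y$ be a continuous map such that $f(D)$ is open in $Y$. Let $E$ and $F$ be connected subsets of $Y$, let $\overline{F}$ denote the closure of $F$ in $Y$, and write $S^{c}:=Y\setminus S$ for $S\subseteq Y$. Then: (I) If $f(D)\subseteq E\subseteq f(\partial D)^{c}$, then $f(D)=E$. (II) If $E\subseteq f(\partial D)^{c}\subseteq E\cup F$, $f(D)\subseteq F^{c}$, and $f(\partial D)\subseteq \overline{F}$, then $f(D)=E$; moreover $E\neq\emptyset$, $E\cap F=\emptyset$, and $f(D)\subseteq f(\partial D)^{c}$. (III) If $f(\partial D)^{c}=E\cup F$, $F\not\subseteq f(D)$, and $f(\partial D)\subseteq\overline{F}$, then $f(D)=E$; moreover $E\neq\emptyset$, $F\neq\emptyset$, $E\cap F=\emptyset$, and $f(D)\subseteq f(\partial D)^{c}$.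
   Context: Note that $\partial D$ is defined as $\overline{D}\setminus D$; complements are taken in $Y$. *)

theory Defs
  imports "HOL-Analysis.Analysis"
begin

end

theory Submission
  imports Defs
begin

theorem mainTheorem3:
  fixes X :: "'a topology" and Y :: "'b topology"
    and D :: "'a set" and f :: "'a \<Rightarrow> 'b" and E F :: "'b set"
  assumes "compact_space X"
    and "D \<subseteq> topspace X" and "D \<noteq> {}"
    and "Hausdorff_space Y"
    and "continuous_map (subtopology X (X closure_of D)) Y f"
    and "openin Y (f ` D)"
    and "connectedin Y E" and "connectedin Y F"
  shows "(f ` D \<subseteq> E \<and> E \<subseteq> topspace Y - f ` (X closure_of D - D)
            \<longrightarrow> f ` D = E)
    \<and> (E \<subseteq> topspace Y - f ` (X closure_of D - D)
         \<and> topspace Y - f ` (X closure_of D - D) \<subseteq> E \<union> F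
         \<and> f ` D \<subseteq> topspace Y - F
         \<and> f ` (X closure_of D - D) \<subseteq> Y closure_of F
         \<longrightarrow> f ` D = E \<and> E \<noteq> {} \<and> E \<inter> F = {}
             \<and> f ` D \<subseteq> topspace Y - f ` (X closure_of D - D))
    \<and> (topspace Y - f ` (X closure_of D - D) = E \<union> F
         \<and> \<not> F \<subseteq> f ` D
         \<and> f ` (X closure_of D - D) \<subseteq> Y closure_of F
         \<longrightarrow> f ` D = E \<and> E \<noteq> {} \<and> F \<noteq> {} \<and> E \<inter> F = {}
             \<and> f ` D \<subseteq> topspace Y - f ` (X closure_of D - D))"
proof -
  define C where "C = X closure_of D"
  define B where "B = f ` (C - D)"
  have DC: "D \<subseteq> C" unfolding C_def using assms(2) closure_of_subset by blast
  have fDt: "f ` D \<subseteq> topspace Y" using assms(6) openin_subset by blast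
  have cC: "compactin X C" unfolding C_def
    using assms(1) closedin_closure_of closedin_compact_space by blast
  hence "compactin (subtopology X C) C" by (simp add: compactin_subtopology)
  hence "compactin Y (f ` C)" using image_compactin assms(5) C_def by blast
  hence clC: "closedin Y (f ` C)" using compactin_imp_closedin assms(4) by blast
  have cl: "Y closure_of (f ` D) \<subseteq> f ` D \<union> B"
  proof -
    have "f ` D \<subseteq> f ` C" using DC by (rule image_mono)
    hence "Y closure_of (f ` D) \<subseteq> f ` C" using clC by (rule closure_of_minimal)
    thus ?thesis unfolding B_def by blast
  qed
  have key: "T \<inter> f ` D = {} \<or> T \<subseteq> f ` D" if T: "connectedin Y T" "T \<inter> B = {}" for T
  proof -
    let ?E2 = "topspace Y - Y closure_of (f ` D)"
    have o2: "openin Y ?E2" by (simp add: openin_diff)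
    have Tt: "T \<subseteq> topspace Y" using T(1) by (rule connectedin_subset_topspace)
    have cov: "T \<subseteq> f ` D \<union> ?E2" using Tt cl T(2) by blast
    have dis: "f ` D \<inter> ?E2 \<inter> T = {}" using closure_of_subset[OF fDt] by blast
    have nc: "\<And>E1 E2. openin Y E1 \<Longrightarrow> openin Y E2 \<Longrightarrow> T \<subseteq> E1 \<union> E2 \<Longrightarrow> E1 \<inter> E2 \<inter> T = {} \<Longrightarrow> E1 \<inter> T = {} \<or> E2 \<inter> T = {}"
      using conjunct2[OF iffD1[OF connectedin[of Y T] T(1)]] by blast
    have "f ` D \<inter> T = {} \<or> ?E2 \<inter> T = {}" using nc[OF assms(6) o2 cov dis] .
    thus ?thesis using cov by blast
  qed
  have disj: "f ` D \<inter> Y closure_of G = {}" if "f ` D \<inter> G = {}" for G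
    using openin_Int_closure_of_eq_empty[OF assms(6)] that by blast
  have I: "f ` D = E" if "f ` D \<subseteq> E" "E \<subseteq> topspace Y - B"
  proof -
    have "E \<inter> B = {}" using that by blast
    hence "E \<inter> f ` D = {} \<or> E \<subseteq> f ` D" using key assms(7) by blast
    thus ?thesis using that assms(3) by blast
  qed
  have II: "f ` D = E \<and> E \<noteq> {} \<and> E \<inter> F = {} \<and> f ` D \<subseteq> topspace Y - B"
    if h: "E \<subseteq> topspace Y - B" "topspace Y - B \<subseteq> E \<union> F"
       "f ` D \<subseteq> topspace Y - F" "B \<subseteq> Y closure_of F"
  proof -
    have "f ` D \<inter> F = {}" using h(3) by blast
    hence "f ` D \<inter> B = {}" using disj h(4) by blast
    hence s: "f ` D \<subseteq> topspace Y - B" using fDt by blast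
    hence "f ` D \<subseteq> E" using h(2) \<open>f ` D \<inter> F = {}\<close> by blast
    hence "f ` D = E" using I h(1) by blast
    thus ?thesis using s assms(3) \<open>f ` D \<inter> F = {}\<close> by blast
  qed
  have III: "f ` D = E \<and> E \<noteq> {} \<and> F \<noteq> {} \<and> E \<inter> F = {} \<and> f ` D \<subseteq> topspace Y - B"
    if h: "topspace Y - B = E \<union> F" "\<not> F \<subseteq> f ` D" "B \<subseteq> Y closure_of F"
  proof -
    have "F \<inter> B = {}" using h(1) by blast
    hence fF: "f ` D \<inter> F = {}" using key assms(8) h(2) by blast
    hence "f ` D \<inter> B = {}" using disj h(3) by blast
    hence s: "f ` D \<subseteq> topspace Y - B" using fDt by blast
    hence "f ` D \<subseteq> E" using h(1) fF by blast
    hence "f ` D = E" using I h(1) by blast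
    thus ?thesis using s assms(3) fF h(2) by blast
  qed
  show ?thesis unfolding C_def[symmetric] B_def[symmetric]
  proof (intro conjI impI)
    show "f ` D = E" if "f ` D \<subseteq> E \<and> E \<subseteq> topspace Y - B" using I that by blast
  next
    assume h: "E \<subseteq> topspace Y - B \<and> topspace Y - B \<subseteq> E \<union> F \<and> f ` D \<subseteq> topspace Y - F \<and> B \<subseteq> Y closure_of F"
    have "f ` D = E \<and> E \<noteq> {} \<and> E \<inter> F = {} \<and> f ` D \<subseteq> topspace Y - B"
      using h II by blast
    thus "f ` D = E" "E \<noteq> {}" "E \<inter> F = {}" "f ` D \<subseteq> topspace Y - B" by auto
  next
    assume h: "topspace Y - B = E \<union> F \<and> \<not> F \<subseteq> f ` D \<and> B \<subseteq> Y closure_of F"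
    have "f ` D = E \<and> E \<noteq> {} \<and> F \<noteq> {} \<and> E \<inter> F = {} \<and> f ` D \<subseteq> topspace Y - B"
      using h III by blast
    thus "f ` D = E" "E \<noteq> {}" "F \<noteq> {}" "E \<inter> F = {}" "f ` D \<subseteq> topspace Y - B" by auto
  qed
qed

end
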